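(* Let $S\subseteq\Sigma^n$ be a prime double-code and $i,i'\in[n]$. Then either $\backslash_i S=\backslash_{i'}S$ or $\backslash_i S\cap\backslash_{i'}S=\emptyset$.
   Context: Let $\Sigma=\{0,1,2,3\}$, $[n]=\{1,\ldots,n\}$. An $i$-line of $\Sigma^n$ is a set of the four words that agree in all coordinates except the $i$th; a line is an $i$-line for some $i$. A double-code is a set meeting every line in $0$ or $2$ elements; a double-MDS-code is a set meeting every line in exactly $2$ elements; a double-code is complementable if contained in a double-MDS-code, and prime if complementable, nonempty and not partitionable into two or more nonempty double-codes. For $S\subseteq\Sigma^n$ and $i\in[n]$, $\mathcal E_i(S)$ is the union of all $i$-lines that meet $S$, and $\backslash_i S=\mathcal E_i(S)\setminus S$. *)

theory Defs
  imports Main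
begin

text \<open>Words of Sigma^n, Sigma = {0,1,2,3}, are functions nat => nat that take values
  below 4 on the coordinates 1..n and are 0 elsewhere.\<close>
definition words :: "nat \<Rightarrow> (nat \<Rightarrow> nat) set" where
  "words n = {w. (\<forall>j\<in>{1..n}. w j < 4) \<and> (\<forall>j. j \<notin> {1..n} \<longrightarrow> w j = 0)}"

definition iline :: "nat \<Rightarrow> (nat \<Rightarrow> nat) \<Rightarrow> (nat \<Rightarrow> nat) set" where
  "iline i w = {w(i := a) | a. a < (4::nat)}"

definition ilines :: "nat \<Rightarrow> nat \<Rightarrow> (nat \<Rightarrow> nat) set set" where
  "ilines n i = {iline i w | w. w \<in> words n}"

definition lines :: "nat \<Rightarrow> (nat \<Rightarrow> nat) set set" where
  "lines n = (\<Union>i\<in>{1..n}. ilines n i)"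

definition double_code :: "nat \<Rightarrow> (nat \<Rightarrow> nat) set \<Rightarrow> bool" where
  "double_code n S \<longleftrightarrow> S \<subseteq> words n \<and>
     (\<forall>L\<in>lines n. card (L \<inter> S) = 0 \<or> card (L \<inter> S) = 2)"

definition double_MDS_code :: "nat \<Rightarrow> (nat \<Rightarrow> nat) set \<Rightarrow> bool" where
  "double_MDS_code n S \<longleftrightarrow> S \<subseteq> words n \<and> (\<forall>L\<in>lines n. card (L \<inter> S) = 2)"

definition complementable :: "nat \<Rightarrow> (nat \<Rightarrow> nat) set \<Rightarrow> bool" where
  "complementable n S \<longleftrightarrow> double_code n S \<and> (\<exists>M. double_MDS_code n M \<and> S \<subseteq> M)"

definition partitionable :: "nat \<Rightarrow> (nat \<Rightarrow> nat) set \<Rightarrow> bool" where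
  "partitionable n S \<longleftrightarrow> (\<exists>P. 2 \<le> card P \<and> finite P \<and> \<Union>P = S \<and>
      (\<forall>A\<in>P. A \<noteq> {} \<and> double_code n A) \<and>
      (\<forall>A\<in>P. \<forall>B\<in>P. A \<noteq> B \<longrightarrow> A \<inter> B = {}))"

definition prime_double_code :: "nat \<Rightarrow> (nat \<Rightarrow> nat) set \<Rightarrow> bool" where
  "prime_double_code n S \<longleftrightarrow> complementable n S \<and> S \<noteq> {} \<and> \<not> partitionable n S"

definition ext :: "nat \<Rightarrow> nat \<Rightarrow> (nat \<Rightarrow> nat) set \<Rightarrow> (nat \<Rightarrow> nat) set" where
  "ext n i S = \<Union>{L \<in> ilines n i. L \<inter> S \<noteq> {}}"

definition bslash :: "nat \<Rightarrow> nat \<Rightarrow> (nat \<Rightarrow> nat) set \<Rightarrow> (nat \<Rightarrow> nat) set" where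
  "bslash n i S = ext n i S - S"

end

theory Submission
  imports Defs
begin

definition lineok :: "(nat \<Rightarrow> bool) \<Rightarrow> (nat \<Rightarrow> bool) \<Rightarrow> bool" where
  "lineok P Q \<longleftrightarrow> (card {a. a<4 \<and> P a} = 0 \<or> card {a. a<4 \<and> P a} = 2) \<and>
     card {a. a<4 \<and> Q a} = 2 \<and> (\<forall>a<4. P a \<longrightarrow> Q a)"

lemma lo_card2:
  assumes "lineok P Q" "a0 < 4" "P a0"
  shows "card {a. a<4 \<and> P a} = 2"
proof -
  have "finite {a::nat. a<4 \<and> P a}" by simp
  moreover have "a0 \<in> {a. a<4 \<and> P a}" using assms by simp
  ultimately have "card {a. a<4 \<and> P a} \<noteq> 0" by auto
  thus ?thesis using assms(1) unfolding lineok_def by auto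
qed

lemma lo_QP:
  assumes "lineok P Q" "a0 < 4" "P a0" "a < 4" "Q a"
  shows "P a"
proof -
  have c: "card {a. a<4 \<and> P a} = 2" using lo_card2 assms by blast
  have "{a. a<4 \<and> P a} \<subseteq> {a. a<4 \<and> Q a}" using assms(1) unfolding lineok_def by auto
  moreover have "card {a. a<4 \<and> Q a} = 2" using assms(1) unfolding lineok_def by auto
  ultimately have "{a. a<4 \<and> P a} = {a. a<4 \<and> Q a}" using c
    by (intro card_subset_eq) auto
  thus ?thesis using assms by blast
qed

lemma lo_other:
  assumes "lineok P Q" "a0 < 4" "P a0"
  shows "\<exists>a1<4. a1 \<noteq> a0 \<and> P a1"
proof -
  have c: "card {a. a<4 \<and> P a} = 2" using lo_card2 assms by blast
  then obtain x y where "x \<noteq> y" "{a. a<4 \<and> P a} = {x,y}" by (auto simp: card_2_iff)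
  thus ?thesis using assms by (metis (mono_tags, lifting) insertCI mem_Collect_eq)
qed

lemma lo_three:
  assumes "lineok P Q" "a < 4" "b < 4" "c < 4" "a \<noteq> b" "a \<noteq> c" "b \<noteq> c" "P a" "P b" "P c"
  shows False
proof -
  have c: "card {a. a<4 \<and> P a} = 2" using lo_card2 assms by blast
  have "{a,b,c} \<subseteq> {a. a<4 \<and> P a}" using assms by auto
  hence "card {a,b,c} \<le> 2" using c by (metis card_mono finite_Collect_conjI finite_Collect_less_nat)
  thus False using assms by auto
qed

lemma lo_Q2:
  assumes "lineok P Q"
  shows "\<exists>q1 q2. q1 < 4 \<and> q2 < 4 \<and> q1 \<noteq> q2 \<and> Q q1 \<and> Q q2"
proof -
  have "card {a. a<4 \<and> Q a} = 2" using assms(1) unfolding lineok_def by auto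
  then obtain x y where "x \<noteq> y" "{a. a<4 \<and> Q a} = {x,y}" by (auto simp: card_2_iff)
  thus ?thesis by (metis (mono_tags, lifting) insertCI mem_Collect_eq)
qed

lemma pig5:
  fixes a b c d e :: nat
  assumes "a<4" "b<4" "c<4" "d<4" "e<4" "a\<noteq>b" "a\<noteq>c" "a\<noteq>d" "a\<noteq>e" "b\<noteq>c" "b\<noteq>d" "b\<noteq>e"
    "c\<noteq>d" "c\<noteq>e" "d\<noteq>e"
  shows False
proof -
  have "{a,b,c,d,e} \<subseteq> {0..<4}" using assms by auto
  hence "card {a,b,c,d,e} \<le> 4" by (metis card_atLeastLessThan card_mono finite_atLeastLessThan diff_zero)
  thus False using assms by auto
qed

lemma two_avoid:
  fixes b0 b1 :: nat
  shows "\<exists>b2 b3. b2<4 \<and> b3<4 \<and> b2\<noteq>b3 \<and> b2\<noteq>b0 \<and> b2\<noteq>b1 \<and> b3\<noteq>b0 \<and> b3\<noteq>b1"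
  by presburger

lemma grid_full:
  assumes rows: "\<forall>b<4. lineok (\<lambda>a. P a b) (\<lambda>a. Q a b)"
    and cols: "\<forall>a<4. lineok (\<lambda>b. P a b) (\<lambda>b. Q a b)"
    and ax: "ax < 4" and bx: "bx < 4" and nx: "\<not> P ax bx"
    and a': "a' < 4" "P a' bx" and b': "b' < 4" "P ax b'"
  shows "\<forall>b<4. \<exists>a<4. P a b"
proof (intro allI impI, rule ccontr)
  fix b assume b: "b < 4" and nb: "\<not> (\<exists>a<4. P a b)"
  obtain a1 where a1: "a1 < 4" "a1 \<noteq> a'" "P a1 bx" using lo_other[of "\<lambda>a. P a bx"] rows bx a' by blast
  obtain q1 q2 where q: "q1 < 4" "q2 < 4" "q1 \<noteq> q2" "Q q1 b" "Q q2 b"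
    using lo_Q2 rows b by blast
  have nq: "q \<noteq> a' \<and> q \<noteq> a1 \<and> q \<noteq> ax" if "q < 4" "Q q b" for q
  proof -
    have "P q b" if "q = a' \<or> q = a1 \<or> q = ax"
      using that lo_QP[of "\<lambda>b'. P q b'" "\<lambda>b'. Q q b'"] cols \<open>q<4\<close> \<open>Q q b\<close> bx b a' a1 b' b
      by metis
    thus ?thesis using nb \<open>q<4\<close> by blast
  qed
  have "a' \<noteq> ax" "a1 \<noteq> ax" using nx a' a1 by auto
  thus False using nq[OF q(1,4)] nq[OF q(2,5)] q a1 a' ax pig5[of q1 q2 a' a1 ax] by metis
qed

lemma grid_cols:
  assumes rows: "\<forall>b<4. lineok (\<lambda>a. P a b) (\<lambda>a. Q a b)"
    and cols: "\<forall>a<4. lineok (\<lambda>b. P a b) (\<lambda>b. Q a b)"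
    and full: "\<forall>b<4. \<exists>a<4. P a b" and a: "a < 4"
  shows "\<exists>b<4. P a b"
proof -
  obtain q1 q2 where q: "q1 < 4" "Q a q1" using lo_Q2 cols a by blast
  obtain a0 where "a0 < 4" "P a0 q1" using full q by blast
  hence "P a q1" using lo_QP[of "\<lambda>a. P a q1"] rows q a by blast
  thus ?thesis using q by blast
qed

lemma cube_full:
  assumes dA: "\<forall>b<4. \<forall>c<4. lineok (\<lambda>a. P a b c) (\<lambda>a. Q a b c)"
    and dB: "\<forall>a<4. \<forall>c<4. lineok (\<lambda>b. P a b c) (\<lambda>b. Q a b c)"
    and dC: "\<forall>a<4. \<forall>b<4. lineok (\<lambda>c. P a b c) (\<lambda>c. Q a b c)"
    and a0: "a0 < 4" and b0: "b0 < 4" and c0: "c0 < 4" and c1: "c1 < 4"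
    and p0: "P a0 b0 c0" and p1: "P a0 b0 c1"
    and full0: "\<forall>b<4. \<exists>a<4. P a b c0"
  shows "\<forall>b<4. \<exists>a<4. P a b c1"
proof (rule ccontr)
  assume "\<not> (\<forall>b<4. \<exists>a<4. P a b c1)"
  then obtain bs where bs: "bs < 4" "\<forall>a<4. \<not> P a bs c1" by blast
  obtain a1 where a1: "a1 < 4" "a1 \<noteq> a0" "P a1 b0 c1"
    using lo_other[of "\<lambda>a. P a b0 c1"] dA b0 c1 a0 p1 by blast
  have X: "Q a b c1 \<and> \<not> P a b c0 \<and> (\<forall>b'<4. \<not> P a b' c1)"
    if b: "b < 4" and nb: "\<forall>a<4. \<not> P a b c1" and a: "a < 4" "a \<noteq> a0" "a \<noteq> a1" for a b
  proof -
    obtain q1 q2 where q: "q1 < 4" "q2 < 4" "q1 \<noteq> q2" "Q q1 b c1" "Q q2 b c1"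
      using lo_Q2 dA b c1 by blast
    have nq: "q \<noteq> a0 \<and> q \<noteq> a1" if "q < 4" "Q q b c1" for q
    proof -
      have "P q b c1" if "q = a0 \<or> q = a1"
        using that lo_QP[of "\<lambda>b'. P q b' c1" "\<lambda>b'. Q q b' c1"] dB \<open>q<4\<close> \<open>Q q b c1\<close> b0 b c1 p1 a1
        by metis
      thus ?thesis using nb \<open>q<4\<close> by blast
    qed
    have "a = q1 \<or> a = q2"
    proof (rule ccontr)
      assume "\<not> (a = q1 \<or> a = q2)"
      thus False using nq[OF q(1,4)] nq[OF q(2,5)] q a a0 a1 pig5[of q1 q2 a0 a1 a] by metis
    qed
    hence Qa: "Q a b c1" using q by blast
    have nPa: "\<not> P a b c1" using nb a by blast
    have "\<not> P a b c0"
    proof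
      assume "P a b c0"
      hence "P a b c1" using lo_QP[of "\<lambda>c. P a b c" "\<lambda>c. Q a b c"] dC a b c0 c1 Qa by blast
      thus False using nPa by blast
    qed
    moreover have "\<not> P a b' c1" if "b' < 4" for b'
    proof
      assume "P a b' c1"
      hence "P a b c1" using lo_QP[of "\<lambda>b. P a b c1" "\<lambda>b. Q a b c1"] dB a b c1 Qa that by blast
      thus False using nPa by blast
    qed
    ultimately show ?thesis using Qa by blast
  qed
  have cols: "\<not> P a b' c1" if "a < 4" "a \<noteq> a0" "a \<noteq> a1" "b' < 4" for a b'
    using X[OF bs] that by blast
  obtain b1 where b1: "b1 < 4" "b1 \<noteq> b0" "P a0 b1 c1"
    using lo_other[of "\<lambda>b. P a0 b c1"] dB a0 c1 b0 p1 by blast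
  have Y: "P a0 b c0" if b: "b < 4" "b \<noteq> b0" "b \<noteq> b1" for b
  proof -
    have miss: "\<forall>a<4. \<not> P a b c1"
    proof (intro allI impI notI)
      fix a assume a: "a < 4" "P a b c1"
      hence aa: "a = a0 \<or> a = a1" using cols b by blast
      obtain a' where a': "a' < 4" "a' \<noteq> a" "P a' b c1"
        using lo_other[of "\<lambda>a. P a b c1"] dA b c1 a by blast
      hence "a' = a0 \<or> a' = a1" using cols b by blast
      hence "P a0 b c1" using aa a a' by blast
      thus False using lo_three[of "\<lambda>b. P a0 b c1" "\<lambda>b. Q a0 b c1" b0 b1 b] dB a0 c1 b0 b1 b p1 by blast
    qed
    obtain a where a: "a < 4" "P a b c0" using full0 b by blast
    hence aa: "a = a0 \<or> a = a1" using X[OF b(1) miss] by blast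
    obtain a' where a': "a' < 4" "a' \<noteq> a" "P a' b c0"
      using lo_other[of "\<lambda>a. P a b c0"] dA b c0 a by blast
    hence "a' = a0 \<or> a' = a1" using X[OF b(1) miss] by blast
    thus "P a0 b c0" using aa a a' by blast
  qed
  obtain b2 b3 where bb: "b2<4" "b3<4" "b2\<noteq>b3" "b2\<noteq>b0" "b2\<noteq>b1" "b3\<noteq>b0" "b3\<noteq>b1"
    using two_avoid by blast
  show False using lo_three[of "\<lambda>b. P a0 b c0" "\<lambda>b. Q a0 b c0" b0 b2 b3] dB a0 c0 b0 bb Y p0 by metis
qed

lemma words_upd: "w \<in> words n \<Longrightarrow> k \<in> {1..n} \<Longrightarrow> a < 4 \<Longrightarrow> w(k:=a) \<in> words n"
  unfolding words_def by auto

lemma words_lt: "w \<in> words n \<Longrightarrow> k \<in> {1..n} \<Longrightarrow> w k < 4"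
  unfolding words_def by auto

locale setting =
  fixes n :: nat and S M :: "(nat \<Rightarrow> nat) set"
  assumes dc: "double_code n S" and mds: "double_MDS_code n M" and sub: "S \<subseteq> M"
begin

lemma S_words: "S \<subseteq> words n" using dc unfolding double_code_def by blast

lemma line_lineok:
  assumes u: "u \<in> words n" and k: "k \<in> {1..n}" and f: "\<forall>a. f a = u(k:=a)"
  shows "lineok (\<lambda>a. f a \<in> S) (\<lambda>a. f a \<in> M)"
proof -
  have L: "iline k u \<in> lines n" using u k unfolding lines_def ilines_def by blast
  have inj: "inj_on (\<lambda>a. u(k:=a)) A" for A
    by (rule inj_onI) (metis fun_upd_same)
  have cX: "card (iline k u \<inter> X) = card {a. a<4 \<and> f a \<in> X}" for X
  proof -
    have "iline k u \<inter> X = (\<lambda>a. u(k:=a)) ` {a. a<4 \<and> f a \<in> X}"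
      unfolding iline_def using f by auto
    thus ?thesis using card_image[OF inj] by simp
  qed
  have "card (iline k u \<inter> S) = 0 \<or> card (iline k u \<inter> S) = 2" using dc L unfolding double_code_def by blast
  moreover have "card (iline k u \<inter> M) = 2" using mds L unfolding double_MDS_code_def by blast
  ultimately show ?thesis unfolding lineok_def using cX sub by auto
qed

lemma bslash_eq:
  assumes k: "k \<in> {1..n}"
  shows "bslash n k S = {x \<in> words n. \<exists>a<4. x(k:=a) \<in> S} - S"
proof -
  have "ext n k S = {x \<in> words n. \<exists>a<4. x(k:=a) \<in> S}"
  proof (intro equalityI subsetI)
    fix x assume "x \<in> ext n k S"
    then obtain w where w: "w \<in> words n" "x \<in> iline k w" "iline k w \<inter> S \<noteq> {}"
      unfolding ext_def ilines_def by blast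
    then obtain c where c: "c < 4" "x = w(k:=c)" unfolding iline_def by blast
    obtain a where "a < 4" "w(k:=a) \<in> S" using w(3) unfolding iline_def by blast
    moreover have "x(k:=a) = w(k:=a)" using c by simp
    ultimately show "x \<in> {x \<in> words n. \<exists>a<4. x(k:=a) \<in> S}" using words_upd[OF w(1) k c(1)] c by auto
  next
    fix x assume "x \<in> {x \<in> words n. \<exists>a<4. x(k:=a) \<in> S}"
    then obtain a where x: "x \<in> words n" "a < 4" "x(k:=a) \<in> S" by blast
    have "x = x(k := x k)" by simp
    hence "x \<in> iline k x" using words_lt[OF x(1) k] unfolding iline_def by blast
    moreover have "iline k x \<inter> S \<noteq> {}" using x unfolding iline_def by blast
    ultimately show "x \<in> ext n k S" using x(1) unfolding ext_def ilines_def by blast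
  qed
  thus ?thesis unfolding bslash_def by simp
qed

lemma closed_code:
  assumes G: "G \<subseteq> S" and cl: "\<And>s k c. s \<in> G \<Longrightarrow> k \<in> {1..n} \<Longrightarrow> c < 4 \<Longrightarrow> s(k:=c) \<in> S \<Longrightarrow> s(k:=c) \<in> G"
  shows "double_code n G"
  unfolding double_code_def
proof (intro conjI ballI)
  show "G \<subseteq> words n" using G S_words by blast
next
  fix L assume L: "L \<in> lines n"
  then obtain k w where kw: "k \<in> {1..n}" "w \<in> words n" "L = iline k w"
    unfolding lines_def ilines_def by blast
  show "card (L \<inter> G) = 0 \<or> card (L \<inter> G) = 2"
  proof (cases "L \<inter> G = {}")
    case True thus ?thesis by simp
  next
    case False
    then obtain s where s: "s \<in> G" "s \<in> L" by blast
    then obtain a where a: "s = w(k:=a)" using kw unfolding iline_def by blast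
    have "L \<inter> G = L \<inter> S"
    proof (intro equalityI subsetI)
      fix t assume t: "t \<in> L \<inter> S"
      then obtain c where c: "c < 4" "t = w(k:=c)" using kw unfolding iline_def by blast
      hence "t = s(k:=c)" using a by simp
      thus "t \<in> L \<inter> G" using cl[OF s(1) kw(1) c(1)] t by blast
    qed (use G in blast)
    thus ?thesis using dc L unfolding double_code_def by simp
  qed
qed

end

locale setting2 = setting +
  fixes i i' :: nat
  assumes i: "i \<in> {1..n}" and i': "i' \<in> {1..n}" and ii: "i \<noteq> i'"
    and nonpart: "\<not> partitionable n S"
begin

definition full :: "(nat \<Rightarrow> nat) \<Rightarrow> bool" where
  "full x \<longleftrightarrow> (\<forall>b<4. \<exists>a<4. x(i':=b, i:=a) \<in> S)"

lemma closure:
  assumes s: "s \<in> S" and k: "k \<in> {1..n}" and c1: "c1 < 4" and s1: "s(k:=c1) \<in> S" and fs: "full s"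
  shows "full (s(k:=c1))"
proof -
  have sw: "s \<in> words n" using s S_words by blast
  consider "k = i" | "k = i'" | "k \<noteq> i" "k \<noteq> i'" by blast
  thus ?thesis
  proof cases
    case 1
    have "s(k:=c1, i':=b, i:=a) = s(i':=b, i:=a)" for a b using 1 ii by (auto simp: fun_eq_iff)
    thus ?thesis using fs unfolding full_def by simp
  next
    case 2
    have "s(k:=c1, i':=b, i:=a) = s(i':=b, i:=a)" for a b using 2 ii by (auto simp: fun_eq_iff)
    thus ?thesis using fs unfolding full_def by simp
  next
    case 3
    define P where "P a b c \<longleftrightarrow> s(i:=a, i':=b, k:=c) \<in> S" for a b c
    define Q where "Q a b c \<longleftrightarrow> s(i:=a, i':=b, k:=c) \<in> M" for a b c
    have dA: "\<forall>b<4. \<forall>c<4. lineok (\<lambda>a. P a b c) (\<lambda>a. Q a b c)"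
    proof (intro allI impI)
      fix b c :: nat assume "b < 4" "c < 4"
      hence u: "s(i':=b, k:=c) \<in> words n" using words_upd sw i' k by blast
      have "\<forall>a. s(i:=a, i':=b, k:=c) = (s(i':=b, k:=c))(i:=a)" using 3 ii by (auto simp: fun_eq_iff)
      from line_lineok[OF u i this] show "lineok (\<lambda>a. P a b c) (\<lambda>a. Q a b c)"
        unfolding P_def Q_def .
    qed
    have dB: "\<forall>a<4. \<forall>c<4. lineok (\<lambda>b. P a b c) (\<lambda>b. Q a b c)"
    proof (intro allI impI)
      fix a c :: nat assume "a < 4" "c < 4"
      hence u: "s(i:=a, k:=c) \<in> words n" using words_upd sw i k by blast
      have "\<forall>b. s(i:=a, i':=b, k:=c) = (s(i:=a, k:=c))(i':=b)" using 3 ii by (auto simp: fun_eq_iff)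
      from line_lineok[OF u i' this] show "lineok (\<lambda>b. P a b c) (\<lambda>b. Q a b c)"
        unfolding P_def Q_def .
    qed
    have dC: "\<forall>a<4. \<forall>b<4. lineok (\<lambda>c. P a b c) (\<lambda>c. Q a b c)"
    proof (intro allI impI)
      fix a b :: nat assume "a < 4" "b < 4"
      hence u: "s(i:=a, i':=b) \<in> words n" using words_upd sw i i' by blast
      have "\<forall>c. s(i:=a, i':=b, k:=c) = (s(i:=a, i':=b))(k:=c)" by simp
      from line_lineok[OF u k this] show "lineok (\<lambda>c. P a b c) (\<lambda>c. Q a b c)"
        unfolding P_def Q_def .
    qed
    have e0: "s(i:=s i, i':=s i', k:=s k) = s" by simp
    have e1: "s(i:=s i, i':=s i', k:=c1) = s(k:=c1)" by simp
    have e2: "s(i:=a, i':=b, k:=s k) = s(i':=b, i:=a)" for a b using 3 ii by (auto simp: fun_eq_iff)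
    have e3: "s(i:=a, i':=b, k:=c1) = s(k:=c1, i':=b, i:=a)" for a b using 3 ii by (auto simp: fun_eq_iff)
    have "\<forall>b<4. \<exists>a<4. P a b c1"
    proof (rule cube_full[OF dA dB dC])
      show "s i < 4" "s i' < 4" "s k < 4" using words_lt sw i i' k by auto
      show "c1 < 4" by fact
      show "P (s i) (s i') (s k)" unfolding P_def using e0 s by simp
      show "P (s i) (s i') c1" unfolding P_def using e1 s1 by simp
      show "\<forall>b<4. \<exists>a<4. P a b (s k)" unfolding P_def e2 using fs unfolding full_def by blast
    qed
    thus ?thesis unfolding full_def P_def e3 .
  qed
qed

lemma all_full:
  assumes ex: "\<exists>s\<in>S. full s"
  shows "\<forall>s\<in>S. full s"
proof (rule ccontr)
  assume nf: "\<not> (\<forall>s\<in>S. full s)"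
  define F where "F = {s \<in> S. full s}"
  have cF: "double_code n F"
    by (rule closed_code) (auto simp: F_def intro: closure)
  have cG: "double_code n (S - F)"
  proof (rule closed_code)
    fix s k c assume s: "s \<in> S - F" and k: "k \<in> {1..n}" and c: "c < 4" and t: "s(k:=c) \<in> S"
    have sw: "s \<in> words n" using s S_words by blast
    have "s(k:=c) \<notin> F"
    proof
      assume "s(k:=c) \<in> F"
      hence "full (s(k:=c))" unfolding F_def by blast
      hence "full (s(k:=c, k := s k))" using closure[OF t k words_lt[OF sw k]] s by simp
      thus False using s unfolding F_def by simp
    qed
    thus "s(k:=c) \<in> S - F" using t by blast
  qed blast
  have Fne: "F \<noteq> {}" using ex unfolding F_def by blast
  have Gne: "S - F \<noteq> {}" using nf unfolding F_def by blast
  have "F \<noteq> S - F" using Fne by blast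
  hence "card {F, S - F} = 2" by simp
  moreover have "\<Union>{F, S - F} = S" unfolding F_def by blast
  ultimately have "partitionable n S"
    unfolding partitionable_def using cF cG Fne Gne
    by (intro exI[of _ "{F, S - F}"]) auto
  thus False using nonpart by blast
qed

lemma grid_ok:
  assumes x: "x \<in> words n"
  shows "\<forall>b<4. lineok (\<lambda>a. x(i:=a, i':=b) \<in> S) (\<lambda>a. x(i:=a, i':=b) \<in> M)"
    and "\<forall>a<4. lineok (\<lambda>b. x(i:=a, i':=b) \<in> S) (\<lambda>b. x(i:=a, i':=b) \<in> M)"
proof (intro allI impI)
  fix b :: nat assume "b < 4"
  hence u: "x(i':=b) \<in> words n" using words_upd x i' by blast
  have "\<forall>a. x(i:=a, i':=b) = (x(i':=b))(i:=a)" using ii by (auto simp: fun_eq_iff)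
  from line_lineok[OF u i this] show "lineok (\<lambda>a. x(i:=a, i':=b) \<in> S) (\<lambda>a. x(i:=a, i':=b) \<in> M)" .
next
  show "\<forall>a<4. lineok (\<lambda>b. x(i:=a, i':=b) \<in> S) (\<lambda>b. x(i:=a, i':=b) \<in> M)"
  proof (intro allI impI)
    fix a :: nat assume "a < 4"
    hence u: "x(i:=a) \<in> words n" using words_upd x i by blast
    have "\<forall>b. x(i:=a, i':=b) = (x(i:=a))(i':=b)" by simp
    from line_lineok[OF u i' this] show "lineok (\<lambda>b. x(i:=a, i':=b) \<in> S) (\<lambda>b. x(i:=a, i':=b) \<in> M)" .
  qed
qed

lemma main_sub:
  assumes x: "x \<in> bslash n i S \<inter> bslash n i' S"
  shows "bslash n i S \<subseteq> bslash n i' S"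
proof -
  have xw: "x \<in> words n" and xS: "x \<notin> S" using x bslash_eq[OF i] by auto
  obtain a' where a': "a' < 4" "x(i:=a') \<in> S" using x bslash_eq[OF i] by auto
  obtain b' where b': "b' < 4" "x(i':=b') \<in> S" using x bslash_eq[OF i'] by auto
  note g = grid_ok[OF xw]
  have "\<forall>b<4. \<exists>a<4. x(i:=a, i':=b) \<in> S"
  proof (rule grid_full[OF g])
    show "x i < 4" "x i' < 4" using words_lt xw i i' by auto
    show "x(i := x i, i' := x i') \<notin> S" using xS by simp
    have "x(i:=a', i':=x i') = x(i:=a')" using ii by (auto simp: fun_eq_iff)
    thus "a' < 4" "x(i:=a', i':=x i') \<in> S" using a' by auto
    show "b' < 4" "x(i:=x i, i':=b') \<in> S" using b' by auto
  qed
  moreover have "x(i:=a', i':=b, i:=a) = x(i:=a, i':=b)" for a b using ii by (auto simp: fun_eq_iff)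
  ultimately have "full (x(i:=a'))" unfolding full_def by simp
  hence allf: "\<forall>s\<in>S. full s" using all_full a' by blast
  show ?thesis
  proof
    fix y assume y: "y \<in> bslash n i S"
    have yw: "y \<in> words n" and yS: "y \<notin> S" using y bslash_eq[OF i] by auto
    obtain a where a: "a < 4" "y(i:=a) \<in> S" using y bslash_eq[OF i] by auto
    have "full (y(i:=a))" using allf a by blast
    moreover have "y(i:=a, i':=b, i:=a'') = y(i:=a'', i':=b)" for a'' b using ii by (auto simp: fun_eq_iff)
    ultimately have fy: "\<forall>b<4. \<exists>a<4. y(i:=a, i':=b) \<in> S" unfolding full_def by simp
    obtain b where "b < 4" "y(i:=y i, i':=b) \<in> S"
      using grid_cols[OF grid_ok[OF yw] fy] words_lt[OF yw i] by blast
    hence "b < 4" "y(i':=b) \<in> S" by auto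
    thus "y \<in> bslash n i' S" using yw yS bslash_eq[OF i'] by auto
  qed
qed

end

theorem proposition6:
  fixes n i i' :: nat and S :: "(nat \<Rightarrow> nat) set"
  assumes "prime_double_code n S"
    and "i \<in> {1..n}" and "i' \<in> {1..n}"
  shows "bslash n i S = bslash n i' S \<or> bslash n i S \<inter> bslash n i' S = {}"
proof (cases "i = i'")
  case True thus ?thesis by simp
next
  case False
  obtain M where M: "double_MDS_code n M" "S \<subseteq> M" and dc: "double_code n S" and np: "\<not> partitionable n S"
    using assms(1) unfolding prime_double_code_def complementable_def by blast
  interpret A: setting2 n S M i i' using M dc np assms False by unfold_locales auto
  interpret B: setting2 n S M i' i using M dc np assms False by unfold_locales auto
  show ?thesis
  proof (cases "bslash n i S \<inter> bslash n i' S = {}")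
    case False
    then obtain x where x: "x \<in> bslash n i S \<inter> bslash n i' S" by blast
    have "bslash n i S \<subseteq> bslash n i' S" using A.main_sub[OF x] .
    moreover have "bslash n i' S \<subseteq> bslash n i S" using B.main_sub x by blast
    ultimately show ?thesis by blast
  qed simp
qed

end
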